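(* Let $n_0,n_1\ge 1$ and $r\ge 2$ be integers such that $\left(\frac{1}{n_0}\right)^{\frac{1}{r-1}}+\left(\frac{1}{n_1}\right)^{\frac{1}{r-1}}\ge 1$. Let $$p=\frac{\left(\frac{1}{n_0}\right)^{\frac{1}{r-1}}}{\left(\frac{1}{n_0}\right)^{\frac{1}{r-1}}+\left(\frac{1}{n_1}\right)^{\frac{1}{r-1}}}.$$ Then $n_0p^r+n_1(1-p)^r\le 1$. *)

theory Defs
  imports Complex_Main
begin

end

theory Submission
  imports Defs
begin

lemma root_pow_aux:
  fixes n :: nat and k :: nat
  assumes "n \<ge> 1" "k \<ge> 1"
  shows "real n * ((1 / real n) powr (1 / real k)) ^ k = 1"
proof -
  have pos: "(1 / real n) > 0" using assms by simp
  have "((1 / real n) powr (1 / real k)) ^ k = ((1 / real n) powr (1 / real k)) powr (real k)"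
    using pos by (simp add: powr_realpow)
  also have "\<dots> = (1 / real n) powr (1 / real k * real k)" by (simp add: powr_powr)
  also have "\<dots> = 1 / real n" using assms by simp
  finally show ?thesis using assms by simp
qed

theorem lemma2p2:
  fixes n0 n1 r :: nat and p :: real
  assumes "n0 \<ge> 1" and "n1 \<ge> 1" and "r \<ge> 2"
    and "(1 / real n0) powr (1 / (real r - 1)) + (1 / real n1) powr (1 / (real r - 1)) \<ge> 1"
    and "p = (1 / real n0) powr (1 / (real r - 1)) /
             ((1 / real n0) powr (1 / (real r - 1)) + (1 / real n1) powr (1 / (real r - 1)))"
  shows "real n0 * p ^ r + real n1 * (1 - p) ^ r \<le> 1"
proof -
  define k where "k = r - 1"
  have k1: "k \<ge> 1" and rk: "r = Suc k" and rk': "real r - 1 = real k"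
    using assms(3) by (auto simp: k_def of_nat_diff)
  define a where "a = (1 / real n0) powr (1 / real k)"
  define b where "b = (1 / real n1) powr (1 / real k)"
  define S where "S = a + b"
  have ha: "real n0 * a ^ k = 1" unfolding a_def using root_pow_aux assms(1) k1 by blast
  have hb: "real n1 * b ^ k = 1" unfolding b_def using root_pow_aux assms(2) k1 by blast
  have apos: "a > 0" and bpos: "b > 0" using assms(1,2) by (auto simp: a_def b_def)
  have S1: "S \<ge> 1" using assms(4) by (simp add: S_def a_def b_def rk')
  have Spos: "S > 0" using S1 by simp
  have p: "p = a / S" using assms(5) by (simp add: S_def a_def b_def rk')
  have p1: "1 - p = b / S" using p Spos by (simp add: S_def field_simps)
  have "real n0 * p ^ r = a / S ^ r"
    using ha by (simp add: p rk power_divide)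
  moreover have "real n1 * (1 - p) ^ r = b / S ^ r"
    using hb by (simp add: p1 rk power_divide)
  ultimately have "real n0 * p ^ r + real n1 * (1 - p) ^ r = S / S ^ r"
    by (simp add: S_def add_divide_distrib)
  also have "\<dots> = 1 / S ^ k" using Spos by (simp add: rk)
  also have "\<dots> \<le> 1" using S1 by (simp add: one_le_power)
  finally show ?thesis .
qed

end
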